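(* Fix a positive integer $n$ and two partitions $\Lambda_w$ and $\Lambda_b$ of $n$. Then $$\sum_{T\in\mathbf{W}_{\Lambda_w,\Lambda_b}}\omega(T)-\sum_{T\in\mathbf{B}_{\Lambda_w,\Lambda_b}}\omega(T)=0.$$
   Context: A black and white tree is a finite tree embedded in $\mathbb{C}$ whose vertices are colored black and white so that adjacent vertices have different colors. It is real if it is invariant (including colors) under complex conjugation. Two real trees are isomorphic if one is carried to the other by a homeomorphism of $\mathbb{C}$ commuting with complex conjugation and preserving the orientation of the real axis (and the colors); trees are considered up to isomorphism. The real vertices of a real tree $T$ are its vertices on $\mathbb{R}$; the real part sequence of $T$ is the sequence of (color, degree) of the real vertices from left to right; the first and last real vertices are the border vertices. The weight $\omega(T)$: if the real part sequence is not symmetric (not a palindrome), $\omega(T)=0$; if $T$ has only one real vertex, $\omega(T)=1$; if the real part sequence is symmetric, $T$ has more than one real vertex and the middle real vertex has the same color as the border vertices, $\omega(T)=-1$; if it is symmetric, with more than one real vertex, and the middle real vertex has a different color from the border vertices, $\omega(T)=1$. $T$ is white side (resp. black side) if its rightmost real vertex is white (resp. black). $\mathbf{W}_{\Lambda_w,\Lambda_b}$ (resp. $\mathbf{B}_{\Lambda_w,\Lambda_b}$) is the set of isomorphism classes of white side (resp. black side) real trees with white vertex degrees $\Lambda_w$ and black vertex degrees $\Lambda_b$. *)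

theory Defs
  imports Main "HOL-Library.Multiset"
begin

text \<open>Combinatorial model of real black and white trees.
  Colours: True = white, False = black.

  A real tree meets the real axis in a path of real vertices v_0, ..., v_{k-1}
  (left to right, consecutive ones joined by real edges, colours alternating).
  The part of the tree in the open upper half plane is, at each real vertex,
  an ordered sequence (counterclockwise, from the positive real direction to
  the negative one) of edges, each leading to a planted plane tree; the lower
  half is the mirror image.  Up to isomorphism (homeomorphisms of C commuting
  with conjugation and preserving the orientation of R and the colours) a real
  tree is exactly this data.\<close>

datatype ptree = PNode "ptree list"

text \<open>Multiset of (colour, degree) of the vertices of a planted plane tree
  whose top vertex has colour c (its degree counts the edge to its parent).\<close>
fun pt_degs :: "bool \<Rightarrow> ptree \<Rightarrow> (bool \<times> nat) multiset" where
  "pt_degs c (PNode ts) = {#(c, Suc (length ts))#} + sum_list (map (pt_degs (\<not> c)) ts)"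

text \<open>A real tree: colour of the leftmost real vertex, and for each real vertex
  (left to right) the list of subtrees hanging into the upper half plane.\<close>
type_synonym rtree = "bool \<times> ptree list list"

definition rt_valid :: "rtree \<Rightarrow> bool" where
  "rt_valid T = (snd T \<noteq> [])"

definition real_color :: "rtree \<Rightarrow> nat \<Rightarrow> bool" where
  "real_color T i = (if even i then fst T else \<not> fst T)"

definition real_deg :: "rtree \<Rightarrow> nat \<Rightarrow> nat" where
  "real_deg T i = 2 * length (snd T ! i) + (if 0 < i then 1 else 0)
                   + (if i + 1 < length (snd T) then 1 else 0)"

text \<open>All vertices with colour and degree; non-real vertices come in
  conjugate pairs and are counted twice.\<close>
definition all_degs :: "rtree \<Rightarrow> (bool \<times> nat) multiset" where
  "all_degs T = (\<Sum>i<length (snd T).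
      {#(real_color T i, real_deg T i)#}
      + (let M = sum_list (map (pt_degs (\<not> real_color T i)) (snd T ! i)) in M + M))"

definition white_degs :: "rtree \<Rightarrow> nat multiset" where
  "white_degs T = image_mset snd (filter_mset fst (all_degs T))"

definition black_degs :: "rtree \<Rightarrow> nat multiset" where
  "black_degs T = image_mset snd (filter_mset (\<lambda>p. \<not> fst p) (all_degs T))"

definition real_part_seq :: "rtree \<Rightarrow> (bool \<times> nat) list" where
  "real_part_seq T = map (\<lambda>i. (real_color T i, real_deg T i)) [0..<length (snd T)]"

definition weight :: "rtree \<Rightarrow> int" where
  "weight T = (let s = real_part_seq T; k = length s in
     if rev s \<noteq> s then 0
     else if k = 1 then 1
     else if fst (s ! (k div 2)) = fst (s ! 0) then -1
     else 1)"

definition white_side :: "rtree \<Rightarrow> bool" where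
  "white_side T = real_color T (length (snd T) - 1)"

definition W_set :: "nat multiset \<Rightarrow> nat multiset \<Rightarrow> rtree set" where
  "W_set Lw Lb = {T. rt_valid T \<and> white_degs T = Lw \<and> black_degs T = Lb \<and> white_side T}"

definition B_set :: "nat multiset \<Rightarrow> nat multiset \<Rightarrow> rtree set" where
  "B_set Lw Lb = {T. rt_valid T \<and> white_degs T = Lw \<and> black_degs T = Lb \<and> \<not> white_side T}"

definition is_partition :: "nat \<Rightarrow> nat multiset \<Rightarrow> bool" where
  "is_partition n L = ((\<forall>x\<in>#L. 0 < x) \<and> sum_mset L = n)"

end

theory Submission
  imports Defs
begin

definition col :: "bool \<Rightarrow> nat \<Rightarrow> bool" where
  "col c i = (if even i then c else \<not> c)"

definition dbl :: "bool \<Rightarrow> ptree list \<Rightarrow> (bool \<times> nat) multiset" where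
  "dbl c X = sum_list (map (pt_degs (\<not> c)) X) + sum_list (map (pt_degs (\<not> c)) X)"

fun aux :: "bool \<Rightarrow> nat \<Rightarrow> nat \<Rightarrow> ptree list list \<Rightarrow> (bool \<times> nat) multiset" where
  "aux c l r [] = {#}"
| "aux c l r [X] = {#(c, 2 * length X + l + r)#} + dbl c X"
| "aux c l r (X # Y # Z) = {#(c, 2 * length X + l + 1)#} + dbl c X + aux (\<not> c) 1 r (Y # Z)"

lemma col_Suc: "col c (Suc i) = (\<not> col c i)"
  by (simp add: col_def)

lemma col_0[simp]: "col c 0 = c" by (simp add: col_def)

lemma sum_aux:
  "(\<Sum>i<length L. {#(col c (i+s), 2*length (L!i) + (if 0 < i+s then 1 else 0)
       + (if i+1 < length L then 1 else 0))#} + dbl (col c (i+s)) (L!i))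
   = aux (col c s) (if 0 < s then 1 else 0) 0 L"
proof (induction L arbitrary: s)
  case Nil
  then show ?case by simp
next
  case (Cons X rest)
  show ?case
  proof (cases rest)
    case Nil
    then show ?thesis by simp
  next
    case (Cons Y Z)
    have "(\<Sum>i<length (X # rest). {#(col c (i+s), 2*length ((X#rest)!i) + (if 0 < i+s then 1 else 0)
       + (if i+1 < length (X#rest) then 1 else 0))#} + dbl (col c (i+s)) ((X#rest)!i))
     = ({#(col c s, 2*length X + (if 0 < s then 1 else 0) + 1)#} + dbl (col c s) X)
       + (\<Sum>i<length rest. {#(col c (i+Suc s), 2*length (rest!i) + (if 0 < i+Suc s then 1 else 0)
       + (if i+1 < length rest then 1 else 0))#} + dbl (col c (i+Suc s)) (rest!i))"
      unfolding length_Cons sum.lessThan_Suc_shift using Cons by simp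
    also have "\<dots> = aux (col c s) (if 0 < s then 1 else 0) 0 (X # rest)"
      using Cons.IH[of "Suc s"] Cons by (simp add: col_Suc)
    finally show ?thesis .
  qed
qed

lemma all_degs_aux: "all_degs (c, L) = aux c 0 0 L"
proof -
  have "all_degs (c, L) = (\<Sum>i<length L. {#(col c (i+0), 2*length (L!i) + (if 0 < i+0 then 1 else 0)
       + (if i+1 < length L then 1 else 0))#} + dbl (col c (i+0)) (L!i))"
    unfolding all_degs_def real_color_def real_deg_def col_def dbl_def Let_def fst_conv snd_conv by simp
  also have "\<dots> = aux c 0 0 L" by (subst sum_aux) simp
  finally show ?thesis .
qed

lemma aux_append:
  "xs \<noteq> [] \<Longrightarrow> ys \<noteq> [] \<Longrightarrow>
   aux c l r (xs @ ys) = aux c l 1 xs + aux (col c (length xs)) 1 r ys"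
proof (induction xs arbitrary: c l)
  case Nil then show ?case by simp
next
  case (Cons x xs)
  show ?case
  proof (cases xs)
    case Nil
    then show ?thesis using Cons.prems by (cases ys) (auto simp: col_def)
  next
    case (Cons y zs)
    have "aux c l r ((x # xs) @ ys) = {#(c, 2 * length x + l + 1)#} + dbl c x + aux (\<not> c) 1 r (xs @ ys)"
      using Cons by simp
    also have "\<dots> = {#(c, 2 * length x + l + 1)#} + dbl c x + (aux (\<not> c) 1 1 xs + aux (col (\<not> c) (length xs)) 1 r ys)"
      using Cons.IH[of "\<not> c" 1] Cons Cons.prems by simp
    also have "\<dots> = aux c l 1 (x # xs) + aux (col c (length (x#xs))) 1 r ys"
      using Cons by (simp add: col_def add.assoc)
    finally show ?thesis .
  qed
qed

lemma aux_Cons_ne: "xs \<noteq> [] \<Longrightarrow> aux c l r (x # xs) = {#(c, 2 * length x + l + 1)#} + dbl c x + aux (\<not> c) 1 r xs"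
  by (cases xs) auto

lemma aux_rev: "aux c l r (rev xs) = aux (col c (length xs - 1)) r l xs"
proof (induction xs arbitrary: c l r)
  case Nil then show ?case by simp
next
  case (Cons x xs)
  show ?case
  proof (cases "xs = []")
    case True then show ?thesis by simp
  next
    case False
    have "aux c l r (rev (x # xs)) = aux c l 1 (rev xs) + aux (col c (length xs)) 1 r [x]"
      using False by (simp add: aux_append)
    also have "\<dots> = aux (col c (length xs - 1)) 1 l xs + aux (col c (length xs)) 1 r [x]"
      using Cons.IH by simp
    also have "\<dots> = aux (col c (length (x#xs) - 1)) r l (x # xs)"
      using False by (cases xs) (simp_all add: col_def algebra_simps aux_Cons_ne)
    finally show ?thesis .
  qed
qed


fun fldr :: "(ptree list \<times> ptree list) list \<Rightarrow> ptree" where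
  "fldr [] = PNode []"
| "fldr [(A,B)] = PNode (A @ B)"
| "fldr ((A,B) # P # Ps) = PNode (fldr (P # Ps) # A @ B)"

fun unf :: "ptree \<Rightarrow> (ptree list \<times> ptree list) list" where
  "unf (PNode []) = [([],[])]"
| "unf (PNode (t # ts)) = (if odd (length ts)
      then [(take (Suc (length ts) div 2) (t#ts), drop (Suc (length ts) div 2) (t#ts))]
      else (take (length ts div 2) ts, drop (length ts div 2) ts) # unf t)"

definition eqp :: "(ptree list \<times> ptree list) list \<Rightarrow> bool" where
  "eqp P = (\<forall>p\<in>set P. length (fst p) = length (snd p))"

lemma unf_props: "unf t \<noteq> [] \<and> eqp (unf t) \<and> fldr (unf t) = t"
proof (induction t rule: unf.induct)
  case 1
  then show ?case by (simp add: eqp_def)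
next
  case (2 t ts)
  show ?case
  proof (cases "odd (length ts)")
    case True
    then show ?thesis by (auto simp: eqp_def min_def; presburger)
  next
    case False
    with 2 obtain Q Qs where Q: "unf t = Q # Qs" by (cases "unf t") auto
    have "fldr (unf (PNode (t # ts))) = PNode (fldr (unf t) # take (length ts div 2) ts @ drop (length ts div 2) ts)"
      using False Q by (cases Q) simp
    then show ?thesis using False 2 by (auto simp: eqp_def min_def)
  qed
qed

lemma fldr_unf: "P \<noteq> [] \<Longrightarrow> eqp P \<Longrightarrow> unf (fldr P) = P"
proof (induction P rule: fldr.induct)
  case 1 then show ?case by simp
next
  case (2 A B)
  show ?case
  proof (cases "A @ B")
    case Nil then show ?thesis by simp
  next
    case (Cons t ts)
    have e: "length A = length B" using 2 by (simp add: eqp_def)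
    have l: "Suc (length ts) = 2 * length A" using arg_cong[OF Cons, of length] e by simp
    then have "odd (length ts)" by presburger
    moreover have "Suc (length ts) div 2 = length A" using l by simp
    ultimately have "unf (fldr [(A,B)]) = [(take (length A) (A @ B), drop (length A) (A @ B))]"
      using Cons by simp
    then show ?thesis by simp
  qed
next
  case (3 A B P Ps)
  have e: "length A = length B" and ep: "eqp (P # Ps)" using 3 by (auto simp: eqp_def)
  have "unf (fldr (P # Ps)) = P # Ps" using 3 ep by simp
  then show ?case using e by (simp add: min_def)
qed

lemma fldr_degs: "P \<noteq> [] \<Longrightarrow> eqp P \<Longrightarrow>
  pt_degs e (fldr P) + pt_degs e (fldr P) = aux e 1 0 (map fst P) + aux e 1 0 (map snd P)"
proof (induction P arbitrary: e rule: fldr.induct)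
  case 1 then show ?case by simp
next
  case (2 A B)
  then have e: "length A = length B" by (simp add: eqp_def)
  then show ?case by (simp add: dbl_def algebra_simps mult_2_right)
next
  case (3 A B P Ps)
  have e: "length A = length B" and ep: "eqp (P # Ps)" using 3 by (auto simp: eqp_def)
  note IH = "3.IH"[OF _ ep, of "\<not> e"]
  show ?case using e IH by (cases P) (simp add: dbl_def algebra_simps mult_2_right)
qed


definition realT :: "bool \<Rightarrow> (ptree list \<times> ptree list) list \<Rightarrow> ptree list \<Rightarrow> rtree" where
  "realT d P D = (col d (length P), rev (map fst P) @ [D] @ map snd P)"

definition kT :: "bool \<Rightarrow> ptree \<Rightarrow> ptree list \<Rightarrow> rtree" where
  "kT d t D = (d, [t # D])"

lemma col_col: "col (col d m) m = d" by (simp add: col_def)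

lemma all_degs_realT:
  assumes "P \<noteq> []" "eqp P"
  shows "all_degs (realT d P D) = all_degs (kT d (fldr P) D)"
proof -
  let ?m = "length P" let ?c = "col d ?m"
  have m: "?m \<ge> 1" using assms by (cases P) auto
  have "all_degs (realT d P D) = aux ?c 0 0 (rev (map fst P) @ ([D] @ map snd P))"
    by (simp add: realT_def all_degs_aux)
  also have "\<dots> = aux ?c 0 1 (rev (map fst P)) + aux (col ?c ?m) 1 0 ([D] @ map snd P)"
    using assms by (subst aux_append) auto
  also have "\<dots> = aux (col ?c (?m - 1)) 1 0 (map fst P) + ({#(d, 2 * length D + 2)#} + dbl d D + aux (\<not> d) 1 0 (map snd P))"
    using assms by (simp add: aux_rev col_col aux_Cons_ne)
  also have "col ?c (?m - 1) = (\<not> d)" using m by (cases ?m) (auto simp: col_def)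
  also have "aux (\<not> d) 1 0 (map fst P) + ({#(d, 2 * length D + 2)#} + dbl d D + aux (\<not> d) 1 0 (map snd P))
     = {#(d, 2 * length D + 2)#} + dbl d D + (pt_degs (\<not> d) (fldr P) + pt_degs (\<not> d) (fldr P))"
    using fldr_degs[OF assms, of "\<not> d"] by (simp add: algebra_simps)
  also have "\<dots> = all_degs (kT d (fldr P) D)"
    by (simp add: kT_def all_degs_aux dbl_def algebra_simps)
  finally show ?thesis .
qed

lemma rps_len[simp]: "length (real_part_seq T) = length (snd T)"
  by (simp add: real_part_seq_def)

lemma rps_nth: "i < length (snd T) \<Longrightarrow> real_part_seq T ! i = (col (fst T) i, real_deg T i)"
  by (simp add: real_part_seq_def real_color_def col_def)

lemma rev_eq_iff_nth: "(rev s = s) = (\<forall>i<length s. s ! (length s - 1 - i) = s ! i)"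
  by (auto simp: list_eq_iff_nth_eq rev_nth)

lemma realT_len: "length (snd (realT d P D)) = 2 * length P + 1"
  by (simp add: realT_def)

lemma realT_nth_lt: "i < length P \<Longrightarrow> snd (realT d P D) ! i = fst (P ! (length P - 1 - i))"
  by (simp add: realT_def nth_append rev_nth)

lemma realT_nth_gt: "j < length P \<Longrightarrow> snd (realT d P D) ! (length P + 1 + j) = snd (P ! j)"
  by (simp add: realT_def nth_append)

lemma realT_lens:
  assumes "eqp P" "i \<le> 2 * length P"
  shows "length (snd (realT d P D) ! (2 * length P - i)) = length (snd (realT d P D) ! i)"
proof -
  let ?m = "length P"
  have lt: "length (snd (realT d P D) ! (2 * ?m - i)) = length (snd (realT d P D) ! i)" if "i < ?m" for i
  proof -
    have "2 * ?m - i = ?m + 1 + (?m - 1 - i)" using that by simp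
    then have "snd (realT d P D) ! (2 * ?m - i) = snd (P ! (?m - 1 - i))"
      using realT_nth_gt[of "?m - 1 - i" P d D] that by simp
    moreover have "snd (realT d P D) ! i = fst (P ! (?m - 1 - i))" using realT_nth_lt that by simp
    moreover have "P ! (?m - 1 - i) \<in> set P" using that by simp
    ultimately show ?thesis using assms(1) unfolding eqp_def by auto
  qed
  consider "i < ?m" | "i = ?m" | "i > ?m" by linarith
  then show ?thesis
  proof cases
    case 1 then show ?thesis by (rule lt)
  next
    case 2 then show ?thesis by simp
  next
    case 3
    then have "2 * ?m - i < ?m" using assms by simp
    from lt[OF this] show ?thesis using assms(2) by simp
  qed
qed

lemma weight_realT:
  assumes "P \<noteq> []" "eqp P"
  shows "weight (realT d P D) = (if even (length P) then -1 else 1)"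
proof -
  let ?T = "realT d P D" let ?s = "real_part_seq ?T" let ?m = "length P"
  have k: "length ?s = 2 * ?m + 1" by (simp add: realT_len)
  have m: "?m \<ge> 1" using assms by (cases P) auto
  have "rev ?s = ?s"
    unfolding rev_eq_iff_nth
  proof (intro allI impI)
    fix i assume i: "i < length ?s"
    then have i2: "i \<le> 2 * ?m" using k by simp
    have "?s ! (length ?s - 1 - i) = (col (fst ?T) (2 * ?m - i), real_deg ?T (2 * ?m - i))"
      using k i by (simp add: rps_nth realT_len)
    also have "col (fst ?T) (2 * ?m - i) = col (fst ?T) i" using i2 by (simp add: col_def)
    also have "real_deg ?T (2 * ?m - i) = real_deg ?T i"
      unfolding real_deg_def realT_len realT_lens[OF assms(2) i2] using i2 by auto
    finally show "?s ! (length ?s - 1 - i) = ?s ! i" using i by (simp add: rps_nth)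
  qed
  moreover have "fst (?s ! (length ?s div 2)) = col (fst ?T) ?m" using k by (simp add: rps_nth realT_len)
  moreover have "fst (?s ! 0) = fst ?T" using k by (simp add: rps_nth realT_len)
  moreover have "fst ?T = col d ?m" by (simp add: realT_def)
  ultimately show ?thesis using k m unfolding weight_def Let_def
    using assms(1) by (simp add: col_col) (simp add: col_def)
qed

lemma ws_realT: "white_side (realT d P D) = col d (length P)"
  by (simp add: white_side_def real_color_def realT_def col_def)

lemma weight_kT: "weight (kT d t D) = 1"
  by (simp add: weight_def real_part_seq_def kT_def)

lemma ws_kT: "white_side (kT d t D) = d"
  by (simp add: white_side_def real_color_def kT_def)


definition rP :: "ptree list list \<Rightarrow> (ptree list \<times> ptree list) list" where
  "rP L = zip (rev (take (length L div 2) L)) (drop (Suc (length L div 2)) L)"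

definition piT :: "rtree \<Rightarrow> rtree" where
  "piT T = kT (col (fst T) (length (snd T) div 2)) (fldr (rP (snd T))) (snd T ! (length (snd T) div 2))"

definition psiT :: "rtree \<Rightarrow> rtree" where
  "psiT T = realT (fst T) (unf (hd (hd (snd T)))) (tl (hd (snd T)))"

lemma piT_realT: "piT (realT d P D) = kT d (fldr P) D"
proof -
  have L: "length (snd (realT d P D)) div 2 = length P" by (simp add: realT_len)
  have "rP (snd (realT d P D)) = P"
    unfolding rP_def L by (simp add: realT_def zip_map_fst_snd)
  moreover have "snd (realT d P D) ! length P = D" by (simp add: realT_def nth_append)
  ultimately show ?thesis unfolding piT_def L by (simp add: realT_def col_col)
qed

lemma psiT_kT: "psiT (kT d t D) = realT d (unf t) D"
  by (simp add: psiT_def kT_def)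

lemma char_real:
  assumes "rt_valid T" "weight T \<noteq> 0" "length (snd T) \<noteq> 1"
  shows "rP (snd T) \<noteq> [] \<and> eqp (rP (snd T)) \<and>
         T = realT (col (fst T) (length (snd T) div 2)) (rP (snd T)) (snd T ! (length (snd T) div 2))"
proof -
  obtain c L where T: "T = (c, L)" by (cases T)
  let ?s = "real_part_seq T" let ?k = "length L"
  have k0: "?k \<ge> 1" using assms(1) T by (cases L) (auto simp: rt_valid_def)
  have rv: "rev ?s = ?s" using assms(2) unfolding weight_def Let_def by (auto split: if_splits)
  then have sym: "?s ! (?k - 1 - i) = ?s ! i" if "i < ?k" for i
    using that T unfolding rev_eq_iff_nth by simp
  have "odd ?k"
  proof
    assume ev: "even ?k"
    have "?s ! (?k - 1 - 0) = ?s ! 0" using sym[of 0] k0 by (cases L) auto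
    then have "col c (?k - 1) = col c 0" using k0 T rps_nth[of 0 T] rps_nth[of "?k - 1" T] by (cases L) auto
    moreover have "odd (?k - 1)" using ev k0 by (cases L) auto
    ultimately show False by (simp add: col_def)
  qed
  then obtain m where km: "?k = 2 * m + 1" by (rule oddE)
  have m1: "m \<ge> 1" using assms(3) T km by (cases m) auto
  have mdiv: "?k div 2 = m" using km by simp
  have lens: "length (L ! (?k - 1 - i)) = length (L ! i)" if "i < ?k" for i
  proof -
    have "real_deg T (?k - 1 - i) = real_deg T i" using sym[OF that] that T by (simp add: rps_nth)
    then show ?thesis using that T unfolding real_deg_def by (auto split: if_splits)
  qed
  let ?A = "rev (take m L)" let ?B = "drop (Suc m) L"
  have lA: "length ?A = m" and lB: "length ?B = m" using km by auto
  have rp: "rP L = zip ?A ?B" unfolding rP_def mdiv ..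
  have ne: "rP L \<noteq> []" using rp lA lB m1 by (cases m) auto
  have eq: "eqp (rP L)"
    unfolding eqp_def rp
  proof
    fix p assume "p \<in> set (zip ?A ?B)"
    then obtain j where j: "j < m" "p = (?A ! j, ?B ! j)" using lA lB by (auto simp: set_zip)
    have "?A ! j = L ! (m - 1 - j)" using j km by (simp add: rev_nth)
    moreover have "?B ! j = L ! (?k - 1 - (m - 1 - j))" using j km by (simp add: algebra_simps)
    ultimately show "length (fst p) = length (snd p)" using lens[of "m - 1 - j"] j km by simp
  qed
  have "realT (col c m) (zip ?A ?B) (L ! m) = (c, rev ?A @ [L ! m] @ ?B)"
    using lA lB by (simp add: realT_def col_col)
  also have "rev ?A @ [L ! m] @ ?B = L" using km id_take_nth_drop[of m L] by simp
  finally show ?thesis using ne eq T rp mdiv by simp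
qed


fun nds :: "ptree \<Rightarrow> nat" where
  "nds (PNode ts) = Suc (sum_list (map nds ts))"

lemma size_sum_list_map: "size (sum_list (map f xs) :: 'a multiset) = sum_list (map (\<lambda>x. size (f x)) xs)"
  by (induction xs) auto

lemma size_pt_degs: "size (pt_degs c t) = nds t"
proof (induction c t rule: pt_degs.induct)
  case (1 c ts)
  have "(\<Sum>x\<leftarrow>ts. size (pt_degs (\<not> c) x)) = sum_list (map nds ts)"
    using 1 by (metis (mono_tags, lifting) map_eq_conv)
  then show ?case by (simp add: size_sum_list_map)
qed

lemma nds_pos: "1 \<le> nds t" by (cases t) simp

lemma len_le_sum: "length ts \<le> sum_list (map nds ts)"
proof (induction ts)
  case Nil then show ?case by simp
next
  case (Cons a ts) then show ?case using nds_pos[of a] by simp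
qed

lemma finite_nds: "finite {t. nds t \<le> N}"
proof (induction N)
  case 0
  have "\<And>t. 0 < nds t" by (case_tac t) simp
  then show ?case by (metis (mono_tags) Collect_empty_eq finite.emptyI le_zero_eq not_gr0)
next
  case (Suc N)
  have "{t. nds t \<le> Suc N} \<subseteq> PNode ` {ts. set ts \<subseteq> {t. nds t \<le> N} \<and> length ts \<le> N}"
  proof
    fix t assume t: "t \<in> {t. nds t \<le> Suc N}"
    obtain ts where ts: "t = PNode ts" by (cases t)
    have s: "sum_list (map nds ts) \<le> N" using t ts by simp
    have "set ts \<subseteq> {t. nds t \<le> N}"
      using s member_le_sum_list[of _ "map nds ts"] by fastforce
    moreover have "length ts \<le> N" using s len_le_sum[of ts] by simp
    ultimately show "t \<in> PNode ` {ts. set ts \<subseteq> {t. nds t \<le> N} \<and> length ts \<le> N}" using ts by auto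
  qed
  moreover have "finite (PNode ` {ts. set ts \<subseteq> {t. nds t \<le> N} \<and> length ts \<le> N})"
    using Suc finite_lists_length_le by blast
  ultimately show ?case by (rule finite_subset)
qed

lemma size_aux: "size (aux c l r L) = length L + 2 * sum_list (map (\<lambda>X. sum_list (map nds X)) L)"
  by (induction c l r L rule: aux.induct) (simp_all add: dbl_def size_sum_list_map size_pt_degs)

lemma size_all_degs: "size (all_degs T) = size (white_degs T) + size (black_degs T)"
proof -
  have "all_degs T = filter_mset fst (all_degs T) + filter_mset (\<lambda>p. \<not> fst p) (all_degs T)"
    by (rule multiset_partition)
  then show ?thesis unfolding white_degs_def black_degs_def
    by (metis size_image_mset size_union)
qed

lemma finite_size: "finite {T. size (all_degs T) = N}"
proof -
  let ?S = "(UNIV :: bool set) \<times> {L. set L \<subseteq> {X. set X \<subseteq> {t. nds t \<le> N} \<and> length X \<le> N} \<and> length L \<le> N}"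
  have fin: "finite ?S"
    using finite_lists_length_le[OF finite_lists_length_le[OF finite_nds]] by (intro finite_cartesian_product) auto
  have "{T. size (all_degs T) = N} \<subseteq> ?S"
  proof
    fix T assume "T \<in> {T. size (all_degs T) = N}"
    obtain c L where T: "T = (c, L)" by (cases T)
    have N: "N = length L + 2 * sum_list (map (\<lambda>X. sum_list (map nds X)) L)"
      using \<open>T \<in> _\<close> T by (simp add: all_degs_aux size_aux)
    have "set L \<subseteq> {X. set X \<subseteq> {t. nds t \<le> N} \<and> length X \<le> N}"
    proof
      fix X assume X: "X \<in> set L"
      have sX: "sum_list (map nds X) \<le> N"
        using member_le_sum_list[of "sum_list (map nds X)" "map (\<lambda>X. sum_list (map nds X)) L"] X N by auto
      have "set X \<subseteq> {t. nds t \<le> N}"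
        using sX member_le_sum_list[of _ "map nds X"] by fastforce
      moreover have "length X \<le> N" using sX len_le_sum[of X] by simp
      ultimately show "X \<in> {X. set X \<subseteq> {t. nds t \<le> N} \<and> length X \<le> N}" by simp
    qed
    then show "T \<in> ?S" using N T by simp
  qed
  then show ?thesis using fin finite_subset by blast
qed


definition sg :: "rtree \<Rightarrow> int" where
  "sg T = (if white_side T then weight T else - weight T)"

lemma degs_eq:
  assumes "all_degs T = all_degs T'"
  shows "white_degs T = white_degs T'" "black_degs T = black_degs T'"
  using assms by (simp_all add: white_degs_def black_degs_def)

theorem lemma3p14:
  fixes n :: nat and Lw Lb :: "nat multiset"
  assumes "0 < n" and "is_partition n Lw" and "is_partition n Lb"
  shows "(\<Sum>T\<in>W_set Lw Lb. weight T) - (\<Sum>T\<in>B_set Lw Lb. weight T) = 0"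
proof -
  define Z where "Z = {T. rt_valid T \<and> white_degs T = Lw \<and> black_degs T = Lb}"
  define Z1 where "Z1 = {T\<in>Z. length (snd T) = 1}"
  define Zr where "Zr = {T\<in>Z. length (snd T) \<noteq> 1 \<and> weight T \<noteq> 0}"
  have finZ: "finite Z"
  proof (rule finite_subset[OF _ finite_size[of "size Lw + size Lb"]])
    show "Z \<subseteq> {T. size (all_degs T) = size Lw + size Lb}"
      unfolding Z_def using size_all_degs by auto
  qed
  have W: "W_set Lw Lb = Z \<inter> {T. white_side T}" and B: "B_set Lw Lb = Z \<inter> - {T. white_side T}"
    unfolding W_set_def B_set_def Z_def by auto
  have "(\<Sum>T\<in>Z. sg T) = (\<Sum>T\<in>W_set Lw Lb. weight T) + (\<Sum>T\<in>B_set Lw Lb. - weight T)"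
    unfolding sg_def W B by (rule sum.If_cases[OF finZ])
  then have e1: "(\<Sum>T\<in>W_set Lw Lb. weight T) - (\<Sum>T\<in>B_set Lw Lb. weight T) = (\<Sum>T\<in>Z. sg T)"
    by (simp add: sum_negf)
  have "(\<Sum>T\<in>Z. sg T) = (\<Sum>T\<in>Z1 \<union> Zr. sg T)"
    by (rule sum.mono_neutral_right[OF finZ]) (auto simp: Z1_def Zr_def sg_def)
  also have "\<dots> = (\<Sum>T\<in>Z1. sg T) + (\<Sum>T\<in>Zr. sg T)"
    by (rule sum.union_disjoint) (use finZ in \<open>auto simp: Z1_def Zr_def\<close>)
  also have "(\<Sum>T\<in>Zr. sg T) = (\<Sum>T\<in>Z1. - sg T)"
  proof (rule sum.reindex_bij_witness[where i = psiT and j = piT])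
    fix a assume a: "a \<in> Zr"
    then have v: "rt_valid a" "weight a \<noteq> 0" "length (snd a) \<noteq> 1" and aZ: "a \<in> Z"
      by (auto simp: Zr_def Z_def)
    define d where "d = col (fst a) (length (snd a) div 2)"
    define P where "P = rP (snd a)"
    define D where "D = snd a ! (length (snd a) div 2)"
    have ch: "P \<noteq> []" "eqp P" "a = realT d P D" using char_real[OF v] unfolding d_def P_def D_def by auto
    have pa: "piT a = kT d (fldr P) D" using ch(3) piT_realT by simp
    show "psiT (piT a) = a" using pa ch by (simp add: psiT_kT fldr_unf)
    have ad: "all_degs (piT a) = all_degs a" using pa ch all_degs_realT by simp
    show "piT a \<in> Z1" using aZ degs_eq[OF ad] pa
      by (simp add: Z1_def Z_def kT_def rt_valid_def)
    show "- sg (piT a) = sg a"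
      using pa ch by (simp add: sg_def ws_kT weight_kT ws_realT weight_realT col_col) (simp add: col_def)
  next
    fix b assume b: "b \<in> Z1"
    obtain d L where bL: "b = (d, L)" by (cases b)
    have "length L = 1" using b bL by (simp add: Z1_def)
    then obtain X where LX: "L = [X]" by (cases L) auto
    have bZ: "b \<in> Z" using b by (simp add: Z1_def)
    have "X \<noteq> []"
    proof
      assume X: "X = []"
      then have "all_degs b = {#(d, 0)#}" using bL LX by (simp add: all_degs_aux dbl_def)
      then have "0 \<in># white_degs b \<or> 0 \<in># black_degs b"
        by (cases d) (simp_all add: white_degs_def black_degs_def)
      then show False using bZ assms(2,3) by (auto simp: Z_def is_partition_def)
    qed
    then obtain t D where XtD: "X = t # D" by (cases X) auto
    have bk: "b = kT d t D" using bL LX XtD by (simp add: kT_def)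
    have ps: "psiT b = realT d (unf t) D" using bk psiT_kT by simp
    show "piT (psiT b) = b" using ps bk unf_props[of t] by (simp add: piT_realT)
    have ad: "all_degs (psiT b) = all_degs b" using ps bk unf_props[of t] all_degs_realT by simp
    show "psiT b \<in> Zr"
      using bZ degs_eq[OF ad] ps unf_props[of t] weight_realT[of "unf t"]
      by (auto simp: Zr_def Z_def rt_valid_def realT_len realT_def)
  qed
  finally show ?thesis using e1 by (simp add: sum_negf)
qed

end
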